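(* Let $(\Phi,\{\Gamma_x\}_{x\in D},D)$ be a labeled compact information algebra, let $x\in D$, $\psi\in\Gamma_x$ and $\phi\in\Phi_x$. Then $\psi\ll_x\phi$ if and only if $\psi\le\phi$.
   Context: A labeled information algebra $(\Phi,D)$ consists of a lattice $D$, a set $\Phi$ with a labeling $d:\Phi\to D$, a combination $\otimes:\Phi\times\Phi\to\Phi$ and a marginalization $(\phi,x)\mapsto\phi^{\downarrow x}$ defined for $x\le d(\phi)$, such that: $\otimes$ is associative and commutative; for each $s\in D$ there is $e_s$ with $d(e_s)=s$ and $e_s\otimes\phi=\phi$ whenever $d(\phi)=s$; $d(\phi\otimes\psi)=d(\phi)\vee d(\psi)$; $d(\phi^{\downarrow x})=x$; $(\phi^{\downarrow y})^{\downarrow x}=\phi^{\downarrow x}$ for $x\le y\le d(\phi)$; $(\phi\otimes\psi)^{\downarrow x}=\phi\otimes\psi^{\downarrow x\wedge y}$ when $d(\phi)=x$, $d(\psi)=y$; $e_y^{\downarrow x}=e_x$ for $x\le y$; $\phi\otimes\phi^{\downarrow x}=\phi$ for $x\le d(\phi)$. Let $\Phi_x=\{\phi:d(\phi)=x\}$, order $\psi\le\phi$ iff $\psi\otimes\phi=\phi$, and let $\ll_x$ be the way-below relation of the poset $(\Phi_x,\le)$ ($a\ll_x b$ iff for every directed $X\subseteq\Phi_x$ with $b\le\vee X$ there is $c\in X$ with $a\le c$). A labeled compact information algebra $(\Phi,\{\Gamma_x\}_{x\in D},D)$ is a labeled information algebra with $D$ having a top element $\top$, together with, for each $x\in D$,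 a set $\Gamma_x\subseteq\Phi_x$ closed under combination and containing $e_x$, such that: (convergency) every directed $X\subseteq\Gamma_x$ has a supremum $\vee X$ and $\vee X\in\Phi_x$; (density) $\phi=\vee\{\psi\in\Gamma_x:\psi\ll_x\phi\}$ for all $\phi\in\Phi_x$; (compactness) for every directed $X\subseteq\Gamma_x$ and $\phi\in\Gamma_x$ with $\phi\le\vee X$ there is $\psi\in X$ with $\phi\le\psi$. *)

theory Defs
  imports Main
begin

text \<open>A labeled information algebra (Phi, D): the lattice D is a type 'd, the set Phi is the
  type 'p (all elements), labeling d, combination comb, marginalization marg (only
  constrained for x <= d phi), neutral elements e s.\<close>

definition labeled_info_alg ::
  "('p \<Rightarrow> 'd::lattice) \<Rightarrow> ('p \<Rightarrow> 'p \<Rightarrow> 'p) \<Rightarrow> ('p \<Rightarrow> 'd \<Rightarrow> 'p) \<Rightarrow> ('d \<Rightarrow> 'p) \<Rightarrow> bool" where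
  "labeled_info_alg d comb marg e \<longleftrightarrow>
     (\<forall>a b c. comb (comb a b) c = comb a (comb b c)) \<and>
     (\<forall>a b. comb a b = comb b a) \<and>
     (\<forall>s. d (e s) = s) \<and>
     (\<forall>s \<phi>. d \<phi> = s \<longrightarrow> comb (e s) \<phi> = \<phi>) \<and>
     (\<forall>\<phi> \<psi>. d (comb \<phi> \<psi>) = sup (d \<phi>) (d \<psi>)) \<and>
     (\<forall>\<phi> x. x \<le> d \<phi> \<longrightarrow> d (marg \<phi> x) = x) \<and>
     (\<forall>\<phi> x y. x \<le> y \<and> y \<le> d \<phi> \<longrightarrow> marg (marg \<phi> y) x = marg \<phi> x) \<and>
     (\<forall>\<phi> \<psi> x y. d \<phi> = x \<and> d \<psi> = y \<longrightarrow> marg (comb \<phi> \<psi>) x = comb \<phi> (marg \<psi> (inf x y))) \<and>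
     (\<forall>x y. x \<le> y \<longrightarrow> marg (e y) x = e x) \<and>
     (\<forall>\<phi> x. x \<le> d \<phi> \<longrightarrow> comb \<phi> (marg \<phi> x) = \<phi>)"

definition info_le :: "('p \<Rightarrow> 'p \<Rightarrow> 'p) \<Rightarrow> 'p \<Rightarrow> 'p \<Rightarrow> bool" where
  "info_le comb \<psi> \<phi> \<longleftrightarrow> comb \<psi> \<phi> = \<phi>"

definition Phi_at :: "('p \<Rightarrow> 'd) \<Rightarrow> 'd \<Rightarrow> 'p set" where
  "Phi_at d x = {\<phi>. d \<phi> = x}"

definition info_directed :: "('p \<Rightarrow> 'p \<Rightarrow> 'p) \<Rightarrow> 'p set \<Rightarrow> bool" where
  "info_directed comb X \<longleftrightarrow> X \<noteq> {} \<and>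
     (\<forall>a\<in>X. \<forall>b\<in>X. \<exists>c\<in>X. info_le comb a c \<and> info_le comb b c)"

definition is_sup_at :: "('p \<Rightarrow> 'd) \<Rightarrow> ('p \<Rightarrow> 'p \<Rightarrow> 'p) \<Rightarrow> 'd \<Rightarrow> 'p set \<Rightarrow> 'p \<Rightarrow> bool" where
  "is_sup_at d comb x X s \<longleftrightarrow> s \<in> Phi_at d x \<and> (\<forall>a\<in>X. info_le comb a s) \<and>
     (\<forall>u\<in>Phi_at d x. (\<forall>a\<in>X. info_le comb a u) \<longrightarrow> info_le comb s u)"

definition way_below_at :: "('p \<Rightarrow> 'd) \<Rightarrow> ('p \<Rightarrow> 'p \<Rightarrow> 'p) \<Rightarrow> 'd \<Rightarrow> 'p \<Rightarrow> 'p \<Rightarrow> bool" where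
  "way_below_at d comb x a b \<longleftrightarrow>
     (\<forall>X. X \<subseteq> Phi_at d x \<and> info_directed comb X \<longrightarrow>
        (\<forall>s. is_sup_at d comb x X s \<and> info_le comb b s \<longrightarrow> (\<exists>c\<in>X. info_le comb a c)))"

definition labeled_compact_info_alg ::
  "('p \<Rightarrow> 'd::bounded_lattice_top) \<Rightarrow> ('p \<Rightarrow> 'p \<Rightarrow> 'p) \<Rightarrow> ('p \<Rightarrow> 'd \<Rightarrow> 'p) \<Rightarrow> ('d \<Rightarrow> 'p)
     \<Rightarrow> ('d \<Rightarrow> 'p set) \<Rightarrow> bool" where
  "labeled_compact_info_alg d comb marg e Gamma \<longleftrightarrow>
     labeled_info_alg d comb marg e \<and>
     (\<forall>x. Gamma x \<subseteq> Phi_at d x \<and> e x \<in> Gamma x \<and>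
          (\<forall>a\<in>Gamma x. \<forall>b\<in>Gamma x. comb a b \<in> Gamma x)) \<and>
     (\<forall>x X. X \<subseteq> Gamma x \<and> info_directed comb X \<longrightarrow> (\<exists>s. is_sup_at d comb x X s)) \<and>
     (\<forall>x. \<forall>\<phi>\<in>Phi_at d x. is_sup_at d comb x {\<psi>\<in>Gamma x. way_below_at d comb x \<psi> \<phi>} \<phi>) \<and>
     (\<forall>x X \<phi>. X \<subseteq> Gamma x \<and> info_directed comb X \<and> \<phi> \<in> Gamma x \<longrightarrow>
        (\<forall>s. is_sup_at d comb x X s \<and> info_le comb \<phi> s \<longrightarrow> (\<exists>\<psi>\<in>X. info_le comb \<phi> \<psi>)))"

end

theory Submission
  imports Defs
begin

theorem lemma4p3:
  fixes d :: "'p \<Rightarrow> 'd::bounded_lattice_top"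
    and comb :: "'p \<Rightarrow> 'p \<Rightarrow> 'p" and marg :: "'p \<Rightarrow> 'd \<Rightarrow> 'p"
    and e :: "'d \<Rightarrow> 'p" and Gamma :: "'d \<Rightarrow> 'p set"
  assumes "labeled_compact_info_alg d comb marg e Gamma"
    and "\<psi> \<in> Gamma x" and "\<phi> \<in> Phi_at d x"
  shows "way_below_at d comb x \<psi> \<phi> \<longleftrightarrow> info_le comb \<psi> \<phi>"
proof -
  have A: "labeled_info_alg d comb marg e" using assms(1) unfolding labeled_compact_info_alg_def by (rule conjunct1)
  note Aa = A[unfolded labeled_info_alg_def]
  have assoc: "\<And>a b c. comb (comb a b) c = comb a (comb b c)" using Aa[THEN conjunct1] by blast
  have comm: "\<And>a b. comb a b = comb b a" using Aa[THEN conjunct2, THEN conjunct1] by blast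
  have de: "\<And>s. d (e s) = s" using Aa[THEN conjunct2, THEN conjunct2, THEN conjunct1] by blast
  have eneut: "\<And>\<phi>. comb (e (d \<phi>)) \<phi> = \<phi>" using Aa[THEN conjunct2, THEN conjunct2, THEN conjunct2, THEN conjunct1] by blast
  have comb_marg: "\<And>\<phi> \<psi>. marg (comb \<phi> \<psi>) (d \<phi>) = comb \<phi> (marg \<psi> (inf (d \<phi>) (d \<psi>)))"
    using Aa[THEN conjunct2, THEN conjunct2, THEN conjunct2, THEN conjunct2, THEN conjunct2, THEN conjunct2, THEN conjunct2, THEN conjunct1] by blast
  have me: "\<And>x. marg (e x) x = e x" using Aa[THEN conjunct2, THEN conjunct2, THEN conjunct2, THEN conjunct2, THEN conjunct2, THEN conjunct2, THEN conjunct2, THEN conjunct2, THEN conjunct1] by blast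
  have idm: "\<And>\<phi> x. x \<le> d \<phi> \<Longrightarrow> comb \<phi> (marg \<phi> x) = \<phi>" using Aa[THEN conjunct2, THEN conjunct2, THEN conjunct2, THEN conjunct2, THEN conjunct2, THEN conjunct2, THEN conjunct2, THEN conjunct2, THEN conjunct2] by blast
  have margself: "marg a (d a) = a" for a
  proof -
    have "marg (comb a (e (d a))) (d a) = comb a (marg (e (d a)) (inf (d a) (d (e (d a)))))"
      by (rule comb_marg)
    also have "\<dots> = comb a (e (d a))" using de me by simp
    finally show ?thesis using eneut[of a] comm[of a "e (d a)"] by simp
  qed
  have refl: "info_le comb a a" for a
    using idm[of "d a" a] margself unfolding info_le_def by simp
  have trans: "info_le comb a c" if "info_le comb a b" "info_le comb b c" for a b c
    using that assoc[of a b c] unfolding info_le_def by simp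
  note Cc = assms(1)[unfolded labeled_compact_info_alg_def, THEN conjunct2]
  have G: "\<And>x. Gamma x \<subseteq> Phi_at d x \<and> e x \<in> Gamma x \<and> (\<forall>a\<in>Gamma x. \<forall>b\<in>Gamma x. comb a b \<in> Gamma x)"
    using Cc[THEN conjunct1] by blast
  have conv: "\<And>x X. X \<subseteq> Gamma x \<Longrightarrow> info_directed comb X \<Longrightarrow> \<exists>s. is_sup_at d comb x X s"
    using Cc[THEN conjunct2, THEN conjunct1] by blast
  have dens: "\<And>x \<phi>. \<phi>\<in>Phi_at d x \<Longrightarrow> is_sup_at d comb x {\<psi>\<in>Gamma x. way_below_at d comb x \<psi> \<phi>} \<phi>"
    using Cc[THEN conjunct2, THEN conjunct2, THEN conjunct1] by blast
  have cpt: "\<And>x X \<phi> s. X \<subseteq> Gamma x \<Longrightarrow> info_directed comb X \<Longrightarrow> \<phi> \<in> Gamma x \<Longrightarrow>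
        is_sup_at d comb x X s \<Longrightarrow> info_le comb \<phi> s \<Longrightarrow> (\<exists>\<psi>\<in>X. info_le comb \<phi> \<psi>)"
    using Cc[THEN conjunct2, THEN conjunct2, THEN conjunct2] by blast
  have fwd: "info_le comb a b" if "way_below_at d comb x a b" "b \<in> Phi_at d x" for a b x
  proof -
    have "{b} \<subseteq> Phi_at d x" using that(2) by simp
    moreover have "info_directed comb {b}" unfolding info_directed_def using refl by auto
    moreover have "is_sup_at d comb x {b} b" unfolding is_sup_at_def using that(2) refl by auto
    ultimately show ?thesis using that(1) refl unfolding way_below_at_def by blast
  qed
  show ?thesis
  proof
    assume "way_below_at d comb x \<psi> \<phi>" then show "info_le comb \<psi> \<phi>" using fwd assms(3) by blast
  next
    assume le: "info_le comb \<psi> \<phi>"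
    show "way_below_at d comb x \<psi> \<phi>"
      unfolding way_below_at_def
    proof (intro allI impI, elim conjE)
      fix X s
      assume XP: "X \<subseteq> Phi_at d x" and Xd: "info_directed comb X" and sX: "is_sup_at d comb x X s"
        and ps: "info_le comb \<phi> s"
      define Y where "Y = {g\<in>Gamma x. \<exists>c\<in>X. info_le comb g c}"
      have YG: "Y \<subseteq> Gamma x" unfolding Y_def by blast
      have Yd: "info_directed comb Y"
        unfolding info_directed_def
      proof
        obtain c where c: "c \<in> X" using Xd unfolding info_directed_def by blast
        have "d c = x" using c XP unfolding Phi_at_def by blast
        hence "info_le comb (e x) c" using eneut[of c] unfolding info_le_def by simp
        thus "Y \<noteq> {}" using c G unfolding Y_def by blast
      next
        show "\<forall>a\<in>Y. \<forall>b\<in>Y. \<exists>c\<in>Y. info_le comb a c \<and> info_le comb b c"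
        proof (intro ballI)
          fix a b assume a: "a \<in> Y" and b: "b \<in> Y"
          obtain c1 where c1: "c1 \<in> X" "info_le comb a c1" using a unfolding Y_def by blast
          obtain c2 where c2: "c2 \<in> X" "info_le comb b c2" using b unfolding Y_def by blast
          obtain c3 where c3: "c3 \<in> X" "info_le comb c1 c3" "info_le comb c2 c3"
            using Xd c1 c2 unfolding info_directed_def by blast
          have ac: "info_le comb a c3" using trans c1 c3 by blast
          have bc: "info_le comb b c3" using trans c2 c3 by blast
          have "info_le comb (comb a b) c3" using ac bc assoc[of a b c3] unfolding info_le_def by simp
          moreover have "comb a b \<in> Gamma x" using a b G unfolding Y_def by blast
          ultimately have ab: "comb a b \<in> Y" using c3 unfolding Y_def by blast
          have "info_le comb a (comb a b)" using assoc[of a a b] refl[of a] unfolding info_le_def by simp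
          moreover have "info_le comb b (comb a b)" using assoc[of b b a] refl[of b] comm[of a b] unfolding info_le_def by simp
          ultimately show "\<exists>c\<in>Y. info_le comb a c \<and> info_le comb b c" using ab by blast
        qed
      qed
      obtain t where t: "is_sup_at d comb x Y t" using conv YG Yd by blast
      have "info_le comb s t"
      proof -
        have tP: "t \<in> Phi_at d x" using t unfolding is_sup_at_def by blast
        have "\<forall>c\<in>X. info_le comb c t"
        proof
          fix c assume c: "c \<in> X"
          have cP: "c \<in> Phi_at d x" using c XP by blast
          have "\<forall>g\<in>{g\<in>Gamma x. way_below_at d comb x g c}. info_le comb g t"
          proof
            fix g assume g: "g \<in> {g\<in>Gamma x. way_below_at d comb x g c}"
            have "info_le comb g c" using fwd g cP by blast
            hence "g \<in> Y" using g c unfolding Y_def by blast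
            thus "info_le comb g t" using t unfolding is_sup_at_def by blast
          qed
          thus "info_le comb c t" using dens[OF cP] tP unfolding is_sup_at_def by blast
        qed
        thus ?thesis using sX tP unfolding is_sup_at_def by blast
      qed
      hence "info_le comb \<psi> t" using le ps trans by blast
      then obtain g where g: "g \<in> Y" "info_le comb \<psi> g" using cpt[OF YG Yd assms(2) t] by blast
      then obtain c where "c \<in> X" "info_le comb g c" unfolding Y_def by blast
      thus "\<exists>c\<in>X. info_le comb \<psi> c" using g trans by blast
    qed
  qed
qed

end
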